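(* The general reduction algorithm, started from any nonzero integer quadruple, halts after finitely many steps. Let the reduced quadruple at termination be ordered as $\mathbf a=(a,b,c,d)$ with $a\le b\le c\le d$, and suppose $L(\mathbf a)=a+b+c+d\ge 0$. Then exactly one of the following holds: (i) $a+b+c\ge d>0$; (ii) $a+b+c\le 0<d$. Furthermore, if $\mathbf a=(a,b,c,d)$ (with $a\le b\le c\le d$) is a reduced quadruple with $L(\mathbf a)<0$, then $\mathbf a^*=(-d,-c,-b,-a)$ is a reduced quadruple with $L(\mathbf a^* )>0$.
   Context: Let $\mathbf S_1,\dots,\mathbf S_4$ be the $4\times4$ integer matrices acting on column vectors $(a_1,a_2,a_3,a_4)^T$ by replacing the $i$-th coordinate $a_i$ by $2\sum_{j\ne i}a_j-a_i$ and leaving the other coordinates fixed (e.g. $\mathbf S_4(a,b,c,d)^T=(a,b,c,2(a+b+c)-d)^T$). For $\mathbf v=(a,b,c,d)$ put $|\mathbf v|=|a|+|b|+|c|+|d|$ and $L(\mathbf v)=a+b+c+d$. General reduction algorithm: given an integer quadruple, (1) order it so that $a\le b\le c\le d$; then test in order $i=1,2,3,4$ whether $|\mathbf S_i\mathbf v|<|\mathbf v|$; for the first such $i$, replace $\mathbf v$ by $\mathbf S_i\mathbf v$ and repeat; (2) if no $\mathbf S_i$ strictly decreases $|\mathbf v|$, halt. A quadruple $\mathbf v$ for which no $\mathbf S_i$ strictly decreases $|\mathbf v|$ is called reduced. A reduced quadruple with $L\ge0$ satisfying (i) is called a root quadruple, one satisfying (ii) an exceptional quadruple; a reduced $\mathbf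 a$ with $L(\mathbf a)<0$ is called root (resp. exceptional) iff $\mathbf a^*$ is. *)

theory Defs
  imports Main
begin

text \<open>Integer quadruples are represented as lists of length 4; coordinate
  indices are 0-based, so \<open>Sop 0\<close>, ..., \<open>Sop 3\<close> are the paper's S_1, ..., S_4.\<close>

definition Sop :: "nat \<Rightarrow> int list \<Rightarrow> int list" where
  "Sop i v = v[i := 2 * (sum_list v - v ! i) - v ! i]"

definition qnorm :: "int list \<Rightarrow> int" where
  "qnorm v = sum_list (map abs v)"

definition L :: "int list \<Rightarrow> int" where
  "L v = sum_list v"

definition reduced :: "int list \<Rightarrow> bool" where
  "reduced v \<longleftrightarrow> (\<forall>i<4. \<not> qnorm (Sop i v) < qnorm v)"

definition star :: "int list \<Rightarrow> int list" where
  "star v = rev (map uminus v)"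

definition alg_step :: "int list \<Rightarrow> int list option" where
  "alg_step v = (let w = sort v in
     case find (\<lambda>i. qnorm (Sop i w) < qnorm w) [0..<4] of
       None \<Rightarrow> None
     | Some i \<Rightarrow> Some (Sop i w))"

inductive alg_result :: "int list \<Rightarrow> int list \<Rightarrow> bool" where
  halt: "alg_step v = None \<Longrightarrow> alg_result v (sort v)"
| step: "alg_step v = Some w \<Longrightarrow> alg_result w a \<Longrightarrow> alg_result v a"

end

theory Submission
  imports Defs "HOL-Library.Multiset"
begin

lemma len4: "length v = 4 \<Longrightarrow> \<exists>a b c d. v = [a,b,c,d]"
  proof -
  assume "length v = 4"
  then show ?thesis by (auto simp: length_Suc_conv numeral_eq_Suc)
qed

lemma qnorm_sort: "qnorm (sort v) = qnorm v"
proof -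
  have "sum_list (map abs (sort v)) = sum_mset (mset (map abs (sort v)))"
    by (rule sum_mset_sum_list[symmetric])
  also have "\<dots> = sum_mset (mset (map abs v))" by simp
  also have "\<dots> = sum_list (map abs v)" by (rule sum_mset_sum_list)
  finally show ?thesis by (simp add: qnorm_def)
qed

lemma less4: "(i::nat) < 4 \<Longrightarrow> i = 0 \<or> i = 1 \<or> i = 2 \<or> i = 3" by auto

lemma Sop_pos:
  assumes "length w = 4" "i < 4" "qnorm w > 0"
  shows "qnorm (Sop i w) > 0" "length (Sop i w) = 4"
proof -
  obtain a b c d where w: "w = [a,b,c,d]" using len4 assms(1) by blast
  show "qnorm (Sop i w) > 0" using less4[OF assms(2)] assms(3)
    by (auto simp: w qnorm_def Sop_def)
  show "length (Sop i w) = 4" by (simp add: Sop_def assms(1))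
qed

lemma exists_result:
  "length v = 4 \<Longrightarrow> qnorm v > 0 \<Longrightarrow> \<exists>a. alg_result v a"
proof (induction "nat (qnorm v)" arbitrary: v rule: less_induct)
  case less
  show ?case
  proof (cases "alg_step v")
    case None
    then show ?thesis using alg_result.halt by blast
  next
    case (Some w)
    then obtain i where i: "i < 4" "qnorm (Sop i (sort v)) < qnorm (sort v)" "w = Sop i (sort v)"
      by (auto simp: alg_step_def Let_def find_Some_iff split: option.splits)
    have l: "length (sort v) = 4" "qnorm (sort v) > 0" using less.prems by (auto simp: qnorm_sort)
    have "length w = 4" "qnorm w > 0" using Sop_pos[OF l(1) i(1) l(2)] i(3) by auto
    moreover have "nat (qnorm w) < nat (qnorm v)" using i l by (simp add: qnorm_sort)
    ultimately obtain a where "alg_result w a" using less.hyps by blast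
    then show ?thesis using alg_result.step[OF Some] by blast
  qed
qed

lemma result_props:
  "alg_result v a \<Longrightarrow> length v = 4 \<Longrightarrow> qnorm v > 0 \<Longrightarrow>
     length a = 4 \<and> sorted a \<and> reduced a \<and> qnorm a > 0"
proof (induction rule: alg_result.induct)
  case (halt v)
  then show ?case
    by (auto simp: alg_step_def Let_def find_None_iff reduced_def qnorm_sort split: option.splits)
next
  case (step v w a)
  then obtain i where i: "i < 4" "w = Sop i (sort v)"
    by (auto simp: alg_step_def Let_def find_Some_iff split: option.splits)
  have l: "length (sort v) = 4" "qnorm (sort v) > 0" using step.prems by (auto simp: qnorm_sort)
  show ?case using step.IH Sop_pos[OF l(1) i(1) l(2)] i(2) by auto
qed

lemma dichotomy:
  assumes "length a = 4" "sorted a" "reduced a" "qnorm a > 0" "L a \<ge> 0"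
  shows "(let x = a ! 0 + a ! 1 + a ! 2; d = a ! 3 in
                   (x \<ge> d \<and> d > 0 \<and> \<not> (x \<le> 0 \<and> 0 < d)) \<or>
                   (x \<le> 0 \<and> 0 < d \<and> \<not> (x \<ge> d \<and> d > 0)))"
proof -
  obtain p q r s where a: "a = [p,q,r,s]" using len4 assms(1) by blast
  have "\<not> qnorm (Sop 3 a) < qnorm a" using assms(3) by (simp add: reduced_def)
  then have h: "\<not> \<bar>2 * (p+q+r) - s\<bar> < \<bar>s\<bar>" by (simp add: a qnorm_def Sop_def)
  have o: "p \<le> q" "q \<le> r" "r \<le> s" using assms(2) by (auto simp: a)
  have z: "p \<noteq> 0 \<or> q \<noteq> 0 \<or> r \<noteq> 0 \<or> s \<noteq> 0" using assms(4) by (auto simp: a qnorm_def)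
  have sm: "p+q+r+s \<ge> 0" using assms(5) by (simp add: a L_def)
  have "s > 0" using o z sm by linarith
  then show ?thesis using h o by (auto simp: a Let_def abs_if split: if_splits)
qed

lemma star_Sop:
  assumes "length a = 4" "i < 4"
  shows "qnorm (Sop i (star a)) = qnorm (Sop (3 - i) a)" "qnorm (star a) = qnorm a"
proof -
  obtain p q r s where a: "a = [p,q,r,s]" using len4 assms(1) by blast
  show "qnorm (Sop i (star a)) = qnorm (Sop (3 - i) a)" using less4[OF assms(2)]
    by (auto simp: a qnorm_def Sop_def star_def algebra_simps)
  show "qnorm (star a) = qnorm a" by (simp add: a qnorm_def star_def)
qed

theorem theorem3p1:
  shows "(\<forall>v :: int list. length v = 4 \<and> v \<noteq> [0, 0, 0, 0] \<longrightarrow>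
            (\<exists>a. alg_result v a) \<and>
            (\<forall>a. alg_result v a \<longrightarrow>
               length a = 4 \<and> sorted a \<and> reduced a \<and>
               (L a \<ge> 0 \<longrightarrow>
                  (let x = a ! 0 + a ! 1 + a ! 2; d = a ! 3 in
                   (x \<ge> d \<and> d > 0 \<and> \<not> (x \<le> 0 \<and> 0 < d)) \<or>
                   (x \<le> 0 \<and> 0 < d \<and> \<not> (x \<ge> d \<and> d > 0))))))
       \<and> (\<forall>a :: int list. length a = 4 \<and> sorted a \<and> reduced a \<and> L a < 0 \<longrightarrow>
            reduced (star a) \<and> L (star a) > 0)"
proof (intro conjI allI impI)
  fix v :: "int list"
  assume v: "length v = 4 \<and> v \<noteq> [0, 0, 0, 0]"
  have q: "qnorm v > 0"
  proof -
    obtain p q r s where "v = [p,q,r,s]" using len4 v by blast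
    then show ?thesis using v by (auto simp: qnorm_def)
  qed
  show "\<exists>a. alg_result v a" using exists_result v q by blast
  fix a assume "alg_result v a"
  then have P: "length a = 4 \<and> sorted a \<and> reduced a \<and> qnorm a > 0"
    using result_props v q by blast
  then show "length a = 4" "sorted a" "reduced a" by auto
  assume "L a \<ge> 0"
  then show "let x = a ! 0 + a ! 1 + a ! 2; d = a ! 3 in
                   (x \<ge> d \<and> d > 0 \<and> \<not> (x \<le> 0 \<and> 0 < d)) \<or>
                   (x \<le> 0 \<and> 0 < d \<and> \<not> (x \<ge> d \<and> d > 0))"
    using dichotomy P by blast
next
  fix a :: "int list"
  assume A: "length a = 4 \<and> sorted a \<and> reduced a \<and> L a < 0"
  show "reduced (star a)"
    unfolding reduced_def
  proof (intro allI impI)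
    fix i :: nat assume i: "i < 4"
    have "\<not> qnorm (Sop (3 - i) a) < qnorm a" using A i by (simp add: reduced_def)
    then show "\<not> qnorm (Sop i (star a)) < qnorm (star a)" using star_Sop A i by simp
  qed
  obtain p q r s where "a = [p,q,r,s]" using len4 A by blast
  then show "L (star a) > 0" using A by (simp add: L_def star_def)
qed

end
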